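(* Let $\mathcal M_R$ be the set of paravector-valued functions $f=\sum_{j=0}^7f_je_j$ on $\mathbb R^8$ (with partial derivatives) satisfying $\partial_xf=0$, equivalently the Riesz system $\partial_{x_0}f_0-\sum_{i=1}^7\partial_{x_i}f_i=0$, $\partial_{x_0}f_i+\partial_{x_i}f_0=0$ ($1\le i\le7$), $\partial_{x_i}f_j-\partial_{x_j}f_i=0$ ($1\le i\ne j\le 7$). Then \[ \mathcal M_R\subsetneq\{f:\partial_xfI=0\}=\{f:[\partial_xfI]_j=0,\ j=0,1,2\}. \] For instance $f=x_2e_1-x_7e_4$ satisfies $\partial_xf=e_4e_7-e_1e_2\neq0$ but $[\partial_xfI]_j=0$ for $j=0,1,2$.
   Context: $\mathrm{Cl}_{0,7}$ is the real associative Clifford algebra generated by $e_1,\dots,e_7$ with $e_ie_j+e_je_i=-2\delta_{ij}$ and $e_0=1$; $e_{i_1\cdots i_k}=e_{i_1}\cdots e_{i_k}$; $[c]_k$ is the grade-$k$ part of $c$. $\partial_xf=\sum_{i,j=0}^7e_ie_j\,\partial_{x_i}f_j$. $W=e_{123}+e_{145}+e_{176}+e_{246}+e_{257}+e_{347}+e_{365}$ and $I=\frac1{16}(1+We_{1234567})(1-e_{1234567})$. *)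

theory Defs
  imports "HOL-Analysis.Analysis"
begin

text \<open>An element of Cl_{0,7} is represented by its coefficient function on
 basis blades e_A, A a subset of {1..7} (listed increasingly); coefficients of
 sets not contained in {1..7} are irrelevant and are produced as 0 by all operations.\<close>

type_synonym cl = "nat set \<Rightarrow> real"

definition clzero :: cl where "clzero = (\<lambda>_. 0)"
definition cladd :: "cl \<Rightarrow> cl \<Rightarrow> cl" where "cladd x y = (\<lambda>A. x A + y A)"
definition clsub :: "cl \<Rightarrow> cl \<Rightarrow> cl" where "clsub x y = (\<lambda>A. x A - y A)"
definition clscale :: "real \<Rightarrow> cl \<Rightarrow> cl" where "clscale r x = (\<lambda>A. r * x A)"

definition blade :: "nat set \<Rightarrow> cl" where "blade B = (\<lambda>A. if A = B then 1 else 0)"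

text \<open>Sign of e_A e_B = sign * e_(A symdiff B) when e_i e_j + e_j e_i = -2 delta_ij.\<close>
definition blade_sign :: "nat set \<Rightarrow> nat set \<Rightarrow> real" where
  "blade_sign A B = (-1) ^ (card {(a,b). a \<in> A \<and> b \<in> B \<and> b < a} + card (A \<inter> B))"

definition clmul :: "cl \<Rightarrow> cl \<Rightarrow> cl" where
  "clmul x y = (\<lambda>C. \<Sum>A\<in>Pow {1..7}. \<Sum>B\<in>Pow {1..7}.
      if (A - B) \<union> (B - A) = C then blade_sign A B * x A * y B else 0)"

definition clone :: cl where "clone = blade {}"

text \<open>index set of e_j, with e_0 = 1\<close>
definition idx :: "nat \<Rightarrow> nat set" where "idx j = (if j = 0 then {} else {j})"

definition e :: "nat \<Rightarrow> cl" where "e j = blade (idx j)"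

definition E :: "nat list \<Rightarrow> cl" where "E is = foldr (\<lambda>i c. clmul (e i) c) is clone"

definition grade :: "nat \<Rightarrow> cl \<Rightarrow> cl" where
  "grade k c = (\<lambda>A. if card A = k then c A else 0)"

definition W :: cl where
  "W = cladd (E [1,2,3]) (cladd (E [1,4,5]) (cladd (E [1,7,6]) (cladd (E [2,4,6])
        (cladd (E [2,5,7]) (cladd (E [3,4,7]) (E [3,6,5]))))))"

definition Icl :: cl where
  "Icl = clscale (1/16) (clmul (cladd clone (clmul W (E [1,2,3,4,5,6,7])))
                              (clsub clone (E [1,2,3,4,5,6,7])))"

text \<open>Coordinate x_i of x in R^8 (i = 0..7) is x \$ of_nat i.\<close>
definition coord_upd :: "real^8 \<Rightarrow> nat \<Rightarrow> real \<Rightarrow> real^8" where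
  "coord_upd x i t = (\<chi> k. if k = (of_nat i :: 8) then t else x $ k)"

definition partial :: "(real^8 \<Rightarrow> real) \<Rightarrow> nat \<Rightarrow> real^8 \<Rightarrow> real" where
  "partial g i x = deriv (\<lambda>t. g (coord_upd x i t)) (x $ (of_nat i :: 8))"

definition paravector :: "cl \<Rightarrow> bool" where
  "paravector c \<longleftrightarrow> (\<forall>A. (\<forall>j\<le>7. A \<noteq> idx j) \<longrightarrow> c A = 0)"

definition comp :: "(real^8 \<Rightarrow> cl) \<Rightarrow> nat \<Rightarrow> real^8 \<Rightarrow> real" where
  "comp f j x = f x (idx j)"

definition has_partials :: "(real^8 \<Rightarrow> cl) \<Rightarrow> bool" where
  "has_partials f \<longleftrightarrow> (\<forall>j\<le>7. \<forall>i\<le>7. \<forall>x.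
      (\<lambda>t. comp f j (coord_upd x i t)) differentiable (at (x $ (of_nat i :: 8))))"

definition paravector_functions :: "(real^8 \<Rightarrow> cl) set" where
  "paravector_functions = {f. (\<forall>x. paravector (f x)) \<and> has_partials f}"

definition dirac :: "(real^8 \<Rightarrow> cl) \<Rightarrow> real^8 \<Rightarrow> cl" where
  "dirac f x = (\<lambda>C. \<Sum>i\<le>7. \<Sum>j\<le>7. clmul (e i) (e j) C * partial (comp f j) i x)"

definition M_R :: "(real^8 \<Rightarrow> cl) set" where
  "M_R = {f \<in> paravector_functions. \<forall>x. dirac f x = clzero}"

definition riesz :: "(real^8 \<Rightarrow> cl) \<Rightarrow> bool" where
  "riesz f \<longleftrightarrow> (\<forall>x.
     partial (comp f 0) 0 x - (\<Sum>i\<in>{1..7}. partial (comp f i) i x) = 0 \<and>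
     (\<forall>i\<in>{1..7}. partial (comp f i) 0 x + partial (comp f 0) i x = 0) \<and>
     (\<forall>i\<in>{1..7}. \<forall>j\<in>{1..7}. i \<noteq> j \<longrightarrow> partial (comp f j) i x - partial (comp f i) j x = 0))"

end

theory Submission
  imports Defs
begin


lemma sum7: "(\<Sum>i\<le>(7::nat). g i) = g 0 + g 1 + g 2 + g 3 + g 4 + g 5 + g 6 + (g 7::real)"
  by (simp add: numeral_eq_Suc atMost_Suc add_ac)
lemma I17: "{1..7::nat} = {1,2,3,4,5,6,7}" by (auto simp: numeral_eq_Suc)

definition bl :: "nat \<Rightarrow> nat list" where
  "bl m = map Suc (filter (bit m) [0..<7])"
definition bs :: "nat \<Rightarrow> nat set" where "bs m = set (bl m)"

lemma bl_distinct: "distinct (bl m)"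
  unfolding bl_def by (simp add: distinct_map)

lemma bl_eval: "bl m = map Suc (filter (\<lambda>i. odd (m div 2^i)) [0,1,2,3,4,5,6])"
  unfolding bl_def bit_iff_odd by (simp add: upt_rec)

lemma mem_bs: "x \<in> bs m \<longleftrightarrow> 1 \<le> x \<and> x \<le> 7 \<and> bit m (x - 1)"
proof -
  have "x \<in> bs m \<longleftrightarrow> (\<exists>i<7. bit m i \<and> x = Suc i)" unfolding bs_def bl_def by auto
  also have "\<dots> \<longleftrightarrow> 1 \<le> x \<and> x \<le> 7 \<and> bit m (x - 1)"
    by (cases x) auto
  finally show ?thesis .
qed

lemma bs_sub: "bs m \<subseteq> {1..7}" by (auto simp: mem_bs)

lemma bs_xor: "bs (xor m n) = (bs m - bs n) \<union> (bs n - bs m)"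
  by (auto simp: mem_bs bit_xor_iff)

lemma bs_inj: assumes "m < 128" "n < 128" "bs m = bs n" shows "m = n"
proof -
  have "bit m k = bit n k" for k
  proof (cases "k < 7")
    case True
    have "Suc k \<in> bs m \<longleftrightarrow> Suc k \<in> bs n" using assms(3) by simp
    then show ?thesis using True by (simp add: mem_bs)
  next
    case False
    have "(2::nat)^7 \<le> 2^k" using False by (intro power_increasing) auto
    then have "m < 2^k" "n < 2^k" using assms by auto
    then show ?thesis by (simp add: bit_iff_odd)
  qed
  then show ?thesis by (simp add: bit_eq_iff)
qed

lemma sign_list:
  assumes "distinct xs" "distinct ys"
  shows "blade_sign (set xs) (set ys) = (-1) ^ (length (filter (\<lambda>(a,b). b < a) (List.product xs ys))
           + length (filter (\<lambda>a. a \<in> set ys) xs))"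
proof -
  have 1: "{(a,b). a \<in> set xs \<and> b \<in> set ys \<and> b < (a::nat)} = set (filter (\<lambda>(a,b). b < a) (List.product xs ys))"
    by auto
  have 2: "set xs \<inter> set ys = set (filter (\<lambda>a. a \<in> set ys) xs)" by auto
  show ?thesis unfolding blade_sign_def 1 2
    by (simp add: distinct_card distinct_product assms del: set_filter)
qed

definition sgl :: "nat list \<Rightarrow> nat list \<Rightarrow> int" where
 "sgl xs ys = (-1) ^ (length (filter (\<lambda>(a,b). b < a) (List.product xs ys)) + length (filter (\<lambda>a. a \<in> set ys) xs))"
definition sg :: "nat \<Rightarrow> nat \<Rightarrow> int" where "sg m n = sgl (bl m) (bl n)"

lemma sign_bs: "blade_sign (bs m) (bs n) = of_int (sg m n)"
  unfolding bs_def sg_def sgl_def by (simp add: sign_list bl_distinct del: set_filter)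

lemma clmul_blade:
  assumes "A \<subseteq> {1..7}" "B \<subseteq> {1..7}"
  shows "clmul (blade A) (blade B) = clscale (blade_sign A B) (blade ((A - B) \<union> (B - A)))"
proof (rule ext)
  fix C
  have h: "\<And>A' B'. (if (A' - B') \<union> (B' - A') = C then blade_sign A' B' * blade A A' * blade B B' else 0)
     = (if B' = B then (if A' = A then (if (A - B) \<union> (B - A) = C then blade_sign A B else 0) else 0) else 0)"
    by (simp add: blade_def)
  show "clmul (blade A) (blade B) C = clscale (blade_sign A B) (blade ((A - B) \<union> (B - A))) C"
    unfolding clmul_def h using assms by (simp add: clscale_def blade_def sum.delta)
qed

lemma clmul_blade_bs: "clmul (blade (bs m)) (blade (bs n)) = clscale (of_int (sg m n)) (blade (bs (xor m n)))"
  using clmul_blade[OF bs_sub bs_sub, of m n] by (simp add: sign_bs bs_xor)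

lemma if_mult_distrib: "(if P then a * b * c else (0::real)) + (if P then a * d * c else 0) = (if P then a * (b + d) * c else 0)"
  by (simp add: algebra_simps)

lemma clmul_add_left: "clmul (cladd x y) z = cladd (clmul x z) (clmul y z)"
  unfolding clmul_def cladd_def
  by (rule ext) (simp add: sum.distrib[symmetric] if_mult_distrib)

lemma clmul_add_right: "clmul z (cladd x y) = cladd (clmul z x) (clmul z y)"
  unfolding clmul_def cladd_def
  by (rule ext) (simp add: sum.distrib[symmetric] algebra_simps if_distrib[where f="\<lambda>x. x + _"] cong: if_cong)

lemma clmul_scale_left: "clmul (clscale r x) z = clscale r (clmul x z)"
  unfolding clmul_def clscale_def
  by (rule ext) (simp add: sum_distrib_left if_distrib algebra_simps cong: if_cong)

lemma clmul_scale_right: "clmul z (clscale r x) = clscale r (clmul z x)"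
  unfolding clmul_def clscale_def
  by (rule ext) (simp add: sum_distrib_left if_distrib algebra_simps cong: if_cong)

lemma clmul_zero_left: "clmul clzero z = clzero"
  unfolding clmul_def clzero_def
  by (rule ext) (simp only: mult_zero_right mult_zero_left, simp)

lemma clmul_zero_right: "clmul z clzero = clzero"
  unfolding clmul_def clzero_def
  by (rule ext) (simp only: mult_zero_right mult_zero_left, simp)

lemma clmul_sum_left: "clmul (\<lambda>C. \<Sum>t\<in>T. w t C) z D = (\<Sum>t\<in>T. clmul (w t) z D)"
proof -
  have h: "\<And>P s zz (ww::'a \<Rightarrow> real). (if P then s * (\<Sum>t\<in>T. ww t) * zz else 0) = (\<Sum>t\<in>T. if P then s * ww t * zz else 0)"
    by (simp add: sum_distrib_left sum_distrib_right)
  show ?thesis unfolding clmul_def h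
    by (subst sum.swap) (simp add: sum.swap[of _ T])
qed

lemma clmul_mult_left: "clmul (\<lambda>C. w C * a) z D = a * clmul w z D"
  unfolding clmul_def
  by (simp add: sum_distrib_left if_distrib algebra_simps cong: if_cong)

fun cv :: "(nat \<times> int) list \<Rightarrow> cl" where
  "cv [] = clzero"
| "cv ((m,r)#ps) = cladd (clscale (of_int r) (blade (bs m))) (cv ps)"

definition mulL :: "(nat \<times> int) list \<Rightarrow> (nat \<times> int) list \<Rightarrow> (nat \<times> int) list" where
  "mulL ps qs = concat (map (\<lambda>(m,r). map (\<lambda>(n,s). (xor m n, sg m n * r * s)) qs) ps)"

definition coef :: "(nat \<times> int) list \<Rightarrow> nat \<Rightarrow> int" where
  "coef ps k = sum_list (map (\<lambda>(m,r). if m = k then r else 0) ps)"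

definition wfl :: "(nat \<times> int) list \<Rightarrow> bool" where
  "wfl ps = list_all (\<lambda>(m,r). m < 128) ps"

lemma cv_apply: "cv ps A = sum_list (map (\<lambda>(m,r). if A = bs m then of_int r else 0) ps)"
  by (induction ps rule: cv.induct) (auto simp: clzero_def cladd_def clscale_def blade_def)

lemma cv_append: "cv (ps @ qs) = cladd (cv ps) (cv qs)"
  by (rule ext) (simp add: cv_apply cladd_def)

lemma cv_scale: "clscale (of_int r) (cv ps) = cv (map (\<lambda>(n,s). (n, r * s)) ps)"
  unfolding fun_eq_iff by (induction ps) (auto simp: cv_apply clscale_def algebra_simps clzero_def)

lemma cv_blade_mul: "clmul (blade (bs m)) (cv qs) = cv (map (\<lambda>(n,s). (xor m n, sg m n * s)) qs)"
proof (induction qs)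
  case Nil then show ?case by (simp add: clmul_zero_right)
next
  case (Cons q qs)
  obtain a b where q: "q = (a,b)" by (cases q)
  have "clmul (blade (bs m)) (cv (q#qs)) = cladd (clscale (of_int b) (clmul (blade (bs m)) (blade (bs a))))
     (clmul (blade (bs m)) (cv qs))" by (simp add: q clmul_add_right clmul_scale_right)
  also have "\<dots> = cv (map (\<lambda>(n,s). (xor m n, sg m n * s)) (q#qs))"
    unfolding clmul_blade_bs Cons.IH by (simp add: q fun_eq_iff cladd_def clscale_def algebra_simps)
  finally show ?case .
qed

lemma cv_mul: "clmul (cv ps) (cv qs) = cv (mulL ps qs)"
proof (induction ps)
  case Nil then show ?case by (simp add: clmul_zero_left mulL_def)
next
  case (Cons p ps)
  obtain m r where p: "p = (m,r)" by (cases p)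
  have "mulL (p # ps) qs = map (\<lambda>(n,s). (n, r * s)) (map (\<lambda>(n,s). (xor m n, sg m n * s)) qs) @ mulL ps qs"
    by (simp add: mulL_def p comp_def case_prod_beta algebra_simps)
  then show ?case using Cons
    by (simp add: p clmul_add_left clmul_scale_left cv_blade_mul cv_scale cv_append)
qed

lemma cv_coef: "wfl ps \<Longrightarrow> k < 128 \<Longrightarrow> cv ps (bs k) = of_int (coef ps k)"
  by (induction ps) (auto simp: cv_apply coef_def wfl_def clzero_def dest: bs_inj)

lemma cv_out: "(\<forall>(m,r)\<in>set ps. A \<noteq> bs m) \<Longrightarrow> cv ps A = 0"
  unfolding cv_apply by (induction ps) (simp_all add: case_prod_beta)

lemma cv_eq:
  assumes "wfl ps" "wfl qs" "set (map fst ps) \<subseteq> set (map fst qs)"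
    "list_all (\<lambda>(k,r). coef ps k = coef qs k) qs"
  shows "cv ps = cv qs"
proof (rule ext)
  fix A
  show "cv ps A = cv qs A"
  proof (cases "\<exists>(k,r)\<in>set qs. A = bs k")
    case True
    then obtain k r where kr: "(k,r) \<in> set qs" "A = bs k" by auto
    have "k < 128" using kr assms(2) by (auto simp: wfl_def list_all_iff)
    then show ?thesis using kr assms by (auto simp: cv_coef list_all_iff)
  next
    case False
    then have "\<forall>(m,r)\<in>set ps. A \<noteq> bs m" using assms(3) by force
    moreover have "\<forall>(m,r)\<in>set qs. A \<noteq> bs m" using False by auto
    ultimately show ?thesis by (simp add: cv_out)
  qed
qed




lemma le7: "(i::nat) \<le> 7 \<Longrightarrow> i=0 \<or> i=1 \<or> i=2 \<or> i=3 \<or> i=4 \<or> i=5 \<or> i=6 \<or> i=7" by arith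

definition msk :: "nat \<Rightarrow> nat" where "msk i = (if i = 0 then 0 else 2^(i-1))"

lemma cv_single: "cv [(m,1)] = blade (bs m)"
  by (simp add: fun_eq_iff cladd_def clscale_def clzero_def)

lemma idx_bs: "i \<le> 7 \<Longrightarrow> idx i = bs (msk i)"
  by (drule le7) (elim disjE; simp add: idx_def msk_def bs_def bl_eval)

lemma e_cv: "i \<le> 7 \<Longrightarrow> e i = cv [(msk i, 1)]"
  unfolding cv_single e_def by (simp add: idx_bs)

lemma e_cvs: "e 0 = cv [(0,1)]" "e 1 = cv [(1,1)]" "e 2 = cv [(2,1)]" "e 3 = cv [(4,1)]"
  "e 4 = cv [(8,1)]" "e 5 = cv [(16,1)]" "e 6 = cv [(32,1)]" "e 7 = cv [(64,1)]"
  by (simp_all add: e_cv msk_def del: cv.simps)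

lemma clone_cv: "clone = cv [(0,1)]"
  unfolding cv_single clone_def by (simp add: bs_def bl_eval)

lemma cv_sub: "clsub (cv ps) (cv qs) = cv (ps @ map (\<lambda>(m,r). (m, - r)) qs)"
proof -
  have "cv (map (\<lambda>(m,r). (m, - r)) qs) = clscale (of_int (-1)) (cv qs)"
    using cv_scale[of "-1" qs] by (simp add: case_prod_beta)
  then show ?thesis by (simp add: cv_append fun_eq_iff clsub_def cladd_def clscale_def)
qed

definition Il :: "(nat \<times> int) list" where "Il = [(0, 1), (7, -1), (25, -1), (30, -1), (42, -1), (45, 1), (51, 1), (52, 1), (75, -1), (76, -1), (82, -1), (85, 1), (97, 1), (102, 1), (120, 1), (127, -1)]"

lemmas sg_eval = sg_def sgl_def bl_eval

lemma W_cv: "W = cv [(7,1),(25,1),(97,-1),(42,1),(82,1),(76,1),(52,-1)]"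
  unfolding W_def E_def foldr.simps comp_apply id_apply e_cvs clone_cv cv_mul cv_append[symmetric]
  apply (simp add: mulL_def del: cv.simps) by (simp add: sg_eval del: cv.simps)

lemma E7_cv: "E [1,2,3,4,5,6,7] = cv [(127,1)]"
  unfolding E_def foldr.simps comp_apply id_apply e_cvs clone_cv cv_mul
  apply (simp add: mulL_def del: cv.simps) by (simp add: sg_eval del: cv.simps)

lemma WE7: "mulL [(7,1),(25,1),(97,-1),(42,1),(82,1),(76,1),(52,-1)] [(127,1)] = [(120, 1), (102, 1), (30, -1), (85, 1), (45, 1), (51, 1), (75, -1)]"
  apply (simp add: mulL_def) by (simp add: sg_eval)

lemma IP: "mulL ([(0,1)] @ [(120, 1), (102, 1), (30, -1), (85, 1), (45, 1), (51, 1), (75, -1)]) ([(0,1)] @ map (\<lambda>(m,r). (m, - r)) [(127,1)]) = 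
 [(0, 1), (127, -1), (120, 1), (7, -1), (102, 1), (25, -1), (30, -1), (97, 1), (85, 1), (42, -1), (45, 1), (82, -1), (51, 1), (76, -1), (75, -1), (52, 1)]"
  apply (simp add: mulL_def) by (simp add: sg_eval)

lemma IPeq: "cv [(0, 1), (127, -1), (120, 1), (7, -1), (102, 1), (25, -1), (30, -1), (97, 1), (85, 1), (42, -1), (45, 1), (82, -1), (51, 1), (76, -1), (75, -1), (52, 1)] = cv Il"
  apply (rule cv_eq) unfolding Il_def by code_simp+

lemma Icl_cv: "Icl = clscale (1/16) (cv Il)"
  unfolding Icl_def W_cv E7_cv clone_cv cv_mul cv_append[symmetric] cv_sub WE7 cv_mul IP IPeq ..




definition low :: "nat list" where "low = [0,1,2,4,8,16,32,64]"

definition ULtab :: "(nat \<times> (nat \<times> int) list) list" where "ULtab = [(0, [(0, 1), (7, -1), (25, -1), (30, -1), (42, -1), (45, 1), (51, 1), (52, 1), (75, -1), (76, -1), (82, -1), (85, 1), (97, 1), (102, 1), (120, 1), (127, -1)]), (1, [(1, 1), (6, 1), (24, 1), (31, -1), (43, -1), (44, -1), (50, -1), (53, 1), (74, 1), (77, -1), (83, -1), (84, -1), (96, -1), (103, 1), (121, 1), (126, 1)]), (2, [(2, 1), (5, -1), (27, 1), (28, 1), (40, 1), (47, -1), (49, 1), (54, 1), (73, -1), (78, -1), (80, 1), (87, -1), (99, -1), (100, -1), (122, 1), (125, -1)]), (4, [(4, 1), (3, 1), (29, 1), (26, -1), (46, 1), (41, 1), (55, 1), (48, -1), (79, -1), (72,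 1), (86, 1), (81, 1), (101, -1), (98, 1), (124, 1), (123, 1)]), (8, [(8, 1), (15, 1), (17, -1), (22, 1), (34, -1), (37, -1), (59, 1), (60, -1), (67, 1), (68, -1), (90, 1), (93, 1), (105, -1), (110, 1), (112, -1), (119, -1)]), (16, [(16, 1), (23, 1), (9, 1), (14, -1), (58, -1), (61, -1), (35, -1), (36, 1), (91, 1), (92, -1), (66, -1), (69, -1), (113, -1), (118, 1), (104, 1), (111, 1)]), (32, [(32, 1), (39, 1), (57, 1), (62, -1), (10, 1), (13, 1), (19, 1), (20, -1), (107, 1), (108, -1), (114, -1), (117, -1), (65, 1), (70, -1), (88, -1), (95, -1)]), (64, [(64, 1), (71, 1), (89, 1), (94, -1), (106, 1), (109, 1), (115, 1), (116, -1), (11, -1), (12, 1), (18, 1), (21, 1), (33, -1), (38, 1), (56, 1), (63, 1)])]"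

definition ULt :: "nat \<Rightarrow> (nat \<times> int) list" where "ULt D = the (map_of ULtab D)"

definition Gt :: "(nat \<times> nat \<times> int) list" where "Gt = [(0, 0, 1), (1, 1, 1), (2, 2, 1), (4, 4, 1), (8, 8, 1), (16, 16, 1), (32, 32, 1), (64, 64, 1), (3, 4, 1), (5, 2, -1), (9, 16, 1), (17, 8, -1), (33, 64, -1), (65, 32, 1), (6, 1, 1), (10, 32, 1), (18, 64, 1), (34, 8, -1), (66, 16, -1), (12, 64, 1), (20, 32, -1), (36, 16, 1), (68, 8, -1), (24, 1, 1), (40, 2, 1), (72, 4, 1), (48, 4, -1), (80, 2, 1), (96, 1, -1)]"

lemma m0: "mulL [(0,1)] Il = [(0, 1), (7, -1), (25, -1), (30, -1), (42, -1), (45, 1), (51, 1), (52, 1), (75, -1), (76, -1), (82, -1), (85, 1), (97, 1), (102, 1), (120, 1), (127, -1)]"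
  unfolding Il_def apply (simp add: mulL_def) by (simp add: sg_eval)

lemma g0: "cv (mulL [(0,1)] Il) = clscale (of_int (1)) (cv (ULt 0))"
  unfolding m0 cv_scale by (rule cv_eq; code_simp)

lemma m1: "mulL [(1,1)] Il = [(1, 1), (6, 1), (24, 1), (31, -1), (43, -1), (44, -1), (50, -1), (53, 1), (74, 1), (77, -1), (83, -1), (84, -1), (96, -1), (103, 1), (121, 1), (126, 1)]"
  unfolding Il_def apply (simp add: mulL_def) by (simp add: sg_eval)

lemma g1: "cv (mulL [(1,1)] Il) = clscale (of_int (1)) (cv (ULt 1))"
  unfolding m1 cv_scale by (rule cv_eq; code_simp)

lemma m2: "mulL [(2,1)] Il = [(2, 1), (5, -1), (27, 1), (28, 1), (40, 1), (47, -1), (49, 1), (54, 1), (73, -1), (78, -1), (80, 1), (87, -1), (99, -1), (100, -1), (122, 1), (125, -1)]"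
  unfolding Il_def apply (simp add: mulL_def) by (simp add: sg_eval)

lemma g2: "cv (mulL [(2,1)] Il) = clscale (of_int (1)) (cv (ULt 2))"
  unfolding m2 cv_scale by (rule cv_eq; code_simp)

lemma m4: "mulL [(4,1)] Il = [(4, 1), (3, 1), (29, 1), (26, -1), (46, 1), (41, 1), (55, 1), (48, -1), (79, -1), (72, 1), (86, 1), (81, 1), (101, -1), (98, 1), (124, 1), (123, 1)]"
  unfolding Il_def apply (simp add: mulL_def) by (simp add: sg_eval)

lemma g4: "cv (mulL [(4,1)] Il) = clscale (of_int (1)) (cv (ULt 4))"
  unfolding m4 cv_scale by (rule cv_eq; code_simp)

lemma m8: "mulL [(8,1)] Il = [(8, 1), (15, 1), (17, -1), (22, 1), (34, -1), (37, -1), (59, 1), (60, -1), (67, 1), (68, -1), (90, 1), (93, 1), (105, -1), (110, 1), (112, -1), (119, -1)]"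
  unfolding Il_def apply (simp add: mulL_def) by (simp add: sg_eval)

lemma g8: "cv (mulL [(8,1)] Il) = clscale (of_int (1)) (cv (ULt 8))"
  unfolding m8 cv_scale by (rule cv_eq; code_simp)

lemma m16: "mulL [(16,1)] Il = [(16, 1), (23, 1), (9, 1), (14, -1), (58, -1), (61, -1), (35, -1), (36, 1), (91, 1), (92, -1), (66, -1), (69, -1), (113, -1), (118, 1), (104, 1), (111, 1)]"
  unfolding Il_def apply (simp add: mulL_def) by (simp add: sg_eval)

lemma g16: "cv (mulL [(16,1)] Il) = clscale (of_int (1)) (cv (ULt 16))"
  unfolding m16 cv_scale by (rule cv_eq; code_simp)

lemma m32: "mulL [(32,1)] Il = [(32, 1), (39, 1), (57, 1), (62, -1), (10, 1), (13, 1), (19, 1), (20, -1), (107, 1), (108, -1), (114, -1), (117, -1), (65, 1), (70, -1), (88, -1), (95, -1)]"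
  unfolding Il_def apply (simp add: mulL_def) by (simp add: sg_eval)

lemma g32: "cv (mulL [(32,1)] Il) = clscale (of_int (1)) (cv (ULt 32))"
  unfolding m32 cv_scale by (rule cv_eq; code_simp)

lemma m64: "mulL [(64,1)] Il = [(64, 1), (71, 1), (89, 1), (94, -1), (106, 1), (109, 1), (115, 1), (116, -1), (11, -1), (12, 1), (18, 1), (21, 1), (33, -1), (38, 1), (56, 1), (63, 1)]"
  unfolding Il_def apply (simp add: mulL_def) by (simp add: sg_eval)

lemma g64: "cv (mulL [(64,1)] Il) = clscale (of_int (1)) (cv (ULt 64))"
  unfolding m64 cv_scale by (rule cv_eq; code_simp)

lemma m3: "mulL [(3,1)] Il = [(3, 1), (4, 1), (26, -1), (29, 1), (41, 1), (46, 1), (48, -1), (55, 1), (72, 1), (79, -1), (81, 1), (86, 1), (98, 1), (101, -1), (123, 1), (124, 1)]"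
  unfolding Il_def apply (simp add: mulL_def) by (simp add: sg_eval)

lemma g3: "cv (mulL [(3,1)] Il) = clscale (of_int (1)) (cv (ULt 4))"
  unfolding m3 cv_scale by (rule cv_eq; code_simp)

lemma m5: "mulL [(5,1)] Il = [(5, 1), (2, -1), (28, -1), (27, -1), (47, 1), (40, -1), (54, -1), (49, -1), (78, 1), (73, 1), (87, 1), (80, -1), (100, 1), (99, 1), (125, 1), (122, -1)]"
  unfolding Il_def apply (simp add: mulL_def) by (simp add: sg_eval)

lemma g5: "cv (mulL [(5,1)] Il) = clscale (of_int (-1)) (cv (ULt 2))"
  unfolding m5 cv_scale by (rule cv_eq; code_simp)

lemma m9: "mulL [(9,1)] Il = [(9, 1), (14, -1), (16, 1), (23, 1), (35, -1), (36, 1), (58, -1), (61, -1), (66, -1), (69, -1), (91, 1), (92, -1), (104, 1), (111, 1), (113, -1), (118, 1)]"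
  unfolding Il_def apply (simp add: mulL_def) by (simp add: sg_eval)

lemma g9: "cv (mulL [(9,1)] Il) = clscale (of_int (1)) (cv (ULt 16))"
  unfolding m9 cv_scale by (rule cv_eq; code_simp)

lemma m17: "mulL [(17,1)] Il = [(17, 1), (22, -1), (8, -1), (15, -1), (59, -1), (60, 1), (34, 1), (37, 1), (90, -1), (93, -1), (67, -1), (68, 1), (112, 1), (119, 1), (105, 1), (110, -1)]"
  unfolding Il_def apply (simp add: mulL_def) by (simp add: sg_eval)

lemma g17: "cv (mulL [(17,1)] Il) = clscale (of_int (-1)) (cv (ULt 8))"
  unfolding m17 cv_scale by (rule cv_eq; code_simp)

lemma m33: "mulL [(33,1)] Il = [(33, 1), (38, -1), (56, -1), (63, -1), (11, 1), (12, -1), (18, -1), (21, -1), (106, -1), (109, -1), (115, -1), (116, 1), (64, -1), (71, -1), (89, -1), (94, 1)]"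
  unfolding Il_def apply (simp add: mulL_def) by (simp add: sg_eval)

lemma g33: "cv (mulL [(33,1)] Il) = clscale (of_int (-1)) (cv (ULt 64))"
  unfolding m33 cv_scale by (rule cv_eq; code_simp)

lemma m65: "mulL [(65,1)] Il = [(65, 1), (70, -1), (88, -1), (95, -1), (107, 1), (108, -1), (114, -1), (117, -1), (10, 1), (13, 1), (19, 1), (20, -1), (32, 1), (39, 1), (57, 1), (62, -1)]"
  unfolding Il_def apply (simp add: mulL_def) by (simp add: sg_eval)

lemma g65: "cv (mulL [(65,1)] Il) = clscale (of_int (1)) (cv (ULt 32))"
  unfolding m65 cv_scale by (rule cv_eq; code_simp)

lemma m6: "mulL [(6,1)] Il = [(6, 1), (1, 1), (31, -1), (24, 1), (44, -1), (43, -1), (53, 1), (50, -1), (77, -1), (74, 1), (84, -1), (83, -1), (103, 1), (96, -1), (126, 1), (121, 1)]"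
  unfolding Il_def apply (simp add: mulL_def) by (simp add: sg_eval)

lemma g6: "cv (mulL [(6,1)] Il) = clscale (of_int (1)) (cv (ULt 1))"
  unfolding m6 cv_scale by (rule cv_eq; code_simp)

lemma m10: "mulL [(10,1)] Il = [(10, 1), (13, 1), (19, 1), (20, -1), (32, 1), (39, 1), (57, 1), (62, -1), (65, 1), (70, -1), (88, -1), (95, -1), (107, 1), (108, -1), (114, -1), (117, -1)]"
  unfolding Il_def apply (simp add: mulL_def) by (simp add: sg_eval)

lemma g10: "cv (mulL [(10,1)] Il) = clscale (of_int (1)) (cv (ULt 32))"
  unfolding m10 cv_scale by (rule cv_eq; code_simp)

lemma m18: "mulL [(18,1)] Il = [(18, 1), (21, 1), (11, -1), (12, 1), (56, 1), (63, 1), (33, -1), (38, 1), (89, 1), (94, -1), (64, 1), (71, 1), (115, 1), (116, -1), (106, 1), (109, 1)]"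
  unfolding Il_def apply (simp add: mulL_def) by (simp add: sg_eval)

lemma g18: "cv (mulL [(18,1)] Il) = clscale (of_int (1)) (cv (ULt 64))"
  unfolding m18 cv_scale by (rule cv_eq; code_simp)

lemma m34: "mulL [(34,1)] Il = [(34, 1), (37, 1), (59, -1), (60, 1), (8, -1), (15, -1), (17, 1), (22, -1), (105, 1), (110, -1), (112, 1), (119, 1), (67, -1), (68, 1), (90, -1), (93, -1)]"
  unfolding Il_def apply (simp add: mulL_def) by (simp add: sg_eval)

lemma g34: "cv (mulL [(34,1)] Il) = clscale (of_int (-1)) (cv (ULt 8))"
  unfolding m34 cv_scale by (rule cv_eq; code_simp)

lemma m66: "mulL [(66,1)] Il = [(66, 1), (69, 1), (91, -1), (92, 1), (104, -1), (111, -1), (113, 1), (118, -1), (9, -1), (14, 1), (16, -1), (23, -1), (35, 1), (36, -1), (58, 1), (61, 1)]"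
  unfolding Il_def apply (simp add: mulL_def) by (simp add: sg_eval)

lemma g66: "cv (mulL [(66,1)] Il) = clscale (of_int (-1)) (cv (ULt 16))"
  unfolding m66 cv_scale by (rule cv_eq; code_simp)

lemma m12: "mulL [(12,1)] Il = [(12, 1), (11, -1), (21, 1), (18, 1), (38, 1), (33, -1), (63, 1), (56, 1), (71, 1), (64, 1), (94, -1), (89, 1), (109, 1), (106, 1), (116, -1), (115, 1)]"
  unfolding Il_def apply (simp add: mulL_def) by (simp add: sg_eval)

lemma g12: "cv (mulL [(12,1)] Il) = clscale (of_int (1)) (cv (ULt 64))"
  unfolding m12 cv_scale by (rule cv_eq; code_simp)

lemma m20: "mulL [(20,1)] Il = [(20, 1), (19, -1), (13, -1), (10, -1), (62, 1), (57, -1), (39, -1), (32, -1), (95, 1), (88, 1), (70, 1), (65, -1), (117, 1), (114, 1), (108, 1), (107, -1)]"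
  unfolding Il_def apply (simp add: mulL_def) by (simp add: sg_eval)

lemma g20: "cv (mulL [(20,1)] Il) = clscale (of_int (-1)) (cv (ULt 32))"
  unfolding m20 cv_scale by (rule cv_eq; code_simp)

lemma m36: "mulL [(36,1)] Il = [(36, 1), (35, -1), (61, -1), (58, -1), (14, -1), (9, 1), (23, 1), (16, 1), (111, 1), (104, 1), (118, 1), (113, -1), (69, -1), (66, -1), (92, -1), (91, 1)]"
  unfolding Il_def apply (simp add: mulL_def) by (simp add: sg_eval)

lemma g36: "cv (mulL [(36,1)] Il) = clscale (of_int (1)) (cv (ULt 16))"
  unfolding m36 cv_scale by (rule cv_eq; code_simp)

lemma m68: "mulL [(68,1)] Il = [(68, 1), (67, -1), (93, -1), (90, -1), (110, -1), (105, 1), (119, 1), (112, 1), (15, -1), (8, -1), (22, -1), (17, 1), (37, 1), (34, 1), (60, 1), (59, -1)]"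
  unfolding Il_def apply (simp add: mulL_def) by (simp add: sg_eval)

lemma g68: "cv (mulL [(68,1)] Il) = clscale (of_int (-1)) (cv (ULt 8))"
  unfolding m68 cv_scale by (rule cv_eq; code_simp)

lemma m24: "mulL [(24,1)] Il = [(24, 1), (31, -1), (1, 1), (6, 1), (50, -1), (53, 1), (43, -1), (44, -1), (83, -1), (84, -1), (74, 1), (77, -1), (121, 1), (126, 1), (96, -1), (103, 1)]"
  unfolding Il_def apply (simp add: mulL_def) by (simp add: sg_eval)

lemma g24: "cv (mulL [(24,1)] Il) = clscale (of_int (1)) (cv (ULt 1))"
  unfolding m24 cv_scale by (rule cv_eq; code_simp)

lemma m40: "mulL [(40,1)] Il = [(40, 1), (47, -1), (49, 1), (54, 1), (2, 1), (5, -1), (27, 1), (28, 1), (99, -1), (100, -1), (122, 1), (125, -1), (73, -1), (78, -1), (80, 1), (87, -1)]"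
  unfolding Il_def apply (simp add: mulL_def) by (simp add: sg_eval)

lemma g40: "cv (mulL [(40,1)] Il) = clscale (of_int (1)) (cv (ULt 2))"
  unfolding m40 cv_scale by (rule cv_eq; code_simp)

lemma m72: "mulL [(72,1)] Il = [(72, 1), (79, -1), (81, 1), (86, 1), (98, 1), (101, -1), (123, 1), (124, 1), (3, 1), (4, 1), (26, -1), (29, 1), (41, 1), (46, 1), (48, -1), (55, 1)]"
  unfolding Il_def apply (simp add: mulL_def) by (simp add: sg_eval)

lemma g72: "cv (mulL [(72,1)] Il) = clscale (of_int (1)) (cv (ULt 4))"
  unfolding m72 cv_scale by (rule cv_eq; code_simp)

lemma m48: "mulL [(48,1)] Il = [(48, 1), (55, -1), (41, -1), (46, -1), (26, 1), (29, -1), (3, -1), (4, -1), (123, -1), (124, -1), (98, -1), (101, 1), (81, -1), (86, -1), (72, -1), (79, 1)]"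
  unfolding Il_def apply (simp add: mulL_def) by (simp add: sg_eval)

lemma g48: "cv (mulL [(48,1)] Il) = clscale (of_int (-1)) (cv (ULt 4))"
  unfolding m48 cv_scale by (rule cv_eq; code_simp)

lemma m80: "mulL [(80,1)] Il = [(80, 1), (87, -1), (73, -1), (78, -1), (122, 1), (125, -1), (99, -1), (100, -1), (27, 1), (28, 1), (2, 1), (5, -1), (49, 1), (54, 1), (40, 1), (47, -1)]"
  unfolding Il_def apply (simp add: mulL_def) by (simp add: sg_eval)

lemma g80: "cv (mulL [(80,1)] Il) = clscale (of_int (1)) (cv (ULt 2))"
  unfolding m80 cv_scale by (rule cv_eq; code_simp)

lemma m96: "mulL [(96,1)] Il = [(96, 1), (103, -1), (121, -1), (126, -1), (74, -1), (77, 1), (83, 1), (84, 1), (43, 1), (44, 1), (50, 1), (53, -1), (1, -1), (6, -1), (24, -1), (31, 1)]"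
  unfolding Il_def apply (simp add: mulL_def) by (simp add: sg_eval)

lemma g96: "cv (mulL [(96,1)] Il) = clscale (of_int (-1)) (cv (ULt 1))"
  unfolding m96 cv_scale by (rule cv_eq; code_simp)

lemma Gt_prop: "(B,D,r) \<in> set Gt \<Longrightarrow> cv (mulL [(B,1)] Il) = clscale (of_int r) (cv (ULt D))"
  unfolding Gt_def by (simp only: set_simps insert_iff empty_iff prod.inject) (elim disjE conjE; simp only: g0 g1 g2 g4 g8 g16 g32 g64 g3 g5 g9 g17 g33 g65 g6 g10 g18 g34 g66 g12 g20 g36 g68 g24 g40 g72 g48 g80 g96)




lemma clscale_clscale: "clscale a (clscale b x) = clscale (a*b) x" by (simp add: clscale_def fun_eq_iff)

lemma T1: "list_all (\<lambda>(B,D,r). D \<in> set low) Gt" by code_simp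
lemma T2: "list_all (\<lambda>i. list_all (\<lambda>j. xor (msk i) (msk j) \<in> set (map fst Gt)) [0,1,2,3,4,5,6,7]) [0,1,2,3,4,5,6,7]" by code_simp
lemma T3: "list_all (\<lambda>D. wfl (ULt D)) low" by code_simp
lemma T4: "list_all (\<lambda>D. list_all (\<lambda>D'. coef (ULt D) D' = (if D' = D then 1 else 0)) low) low" by code_simp

lemma low_lt: "D \<in> set low \<Longrightarrow> D < 128" by (auto simp: low_def)

lemma U_low: assumes a: "D \<in> set low" "D' \<in> set low"
  shows "cv (ULt D) (bs D') = (if D' = D then 1 else 0)"
proof -
  have "wfl (ULt D)" using T3 a by (simp add: list_all_iff)
  moreover have "coef (ULt D) D' = (if D' = D then 1 else 0)" using T4 a by (simp add: list_all_iff)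
  ultimately show ?thesis using cv_coef low_lt[OF a(2)] by simp
qed

lemma mulL_single: "mulL [(B,c)] ps = map (\<lambda>(n,s). (n, c * s)) (mulL [(B,1)] ps)"
  by (simp add: mulL_def case_prod_beta algebra_simps)

lemma eij_cv: "i \<le> 7 \<Longrightarrow> j \<le> 7 \<Longrightarrow> clmul (e i) (e j) = cv [(xor (msk i) (msk j), sg (msk i) (msk j))]"
  by (simp add: e_cv cv_mul mulL_def del: cv.simps)

lemma eijI: assumes "i \<le> 7" "j \<le> 7"
  shows "\<exists>D\<in>set low. \<exists>\<kappa>. clmul (clmul (e i) (e j)) Icl = clscale \<kappa> (cv (ULt D))"
proof -
  have ij: "i \<in> set [0,1,2,3,4,5,6,7]" "j \<in> set [0,1,2,3,4,5,6,7]" using assms le7 by auto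
  have "xor (msk i) (msk j) \<in> set (map fst Gt)" using T2 ij unfolding list_all_iff by blast
  then obtain D r where g: "(xor (msk i) (msk j), D, r) \<in> set Gt" by auto
  have D: "D \<in> set low" using T1 g by (auto simp: list_all_iff)
  have "clmul (clmul (e i) (e j)) Icl = clscale (1/16) (cv (mulL [(xor (msk i) (msk j), sg (msk i) (msk j))] Il))"
    by (simp only: eij_cv assms Icl_cv clmul_scale_right cv_mul)
  also have "\<dots> = clscale (1/16) (clscale (of_int (sg (msk i) (msk j))) (cv (mulL [(xor (msk i) (msk j), 1)] Il)))"
    by (simp only: mulL_single[of _ "sg _ _"] cv_scale)
  also have "\<dots> = clscale (1/16 * of_int (sg (msk i) (msk j)) * of_int r) (cv (ULt D))"
    using Gt_prop[OF g] by (simp add: clscale_clscale del: cv.simps)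
  finally show ?thesis using D by blast
qed

lemma if_mult0: "(if c then a else (0::real)) * u = (if c then a * u else 0)" by simp

lemma core3:
  fixes p :: "nat \<Rightarrow> nat \<Rightarrow> real"
  assumes hyp: "\<forall>D'\<in>set low. (\<Sum>i\<le>7. \<Sum>j\<le>7. p i j * clmul (clmul (e i) (e j)) Icl (bs D')) = 0"
  shows "(\<Sum>i\<le>7. \<Sum>j\<le>7. p i j * clmul (clmul (e i) (e j)) Icl A) = 0"
proof -
  have "\<forall>i j. \<exists>x. i \<le> 7 \<longrightarrow> j \<le> 7 \<longrightarrow> fst x \<in> set low \<and> clmul (clmul (e i) (e j)) Icl = clscale (snd x) (cv (ULt (fst x)))"
    using eijI by fastforce
  then obtain F where F: "\<And>i j. i \<le> 7 \<Longrightarrow> j \<le> 7 \<Longrightarrow> fst (F i j) \<in> set low \<and> clmul (clmul (e i) (e j)) Icl = clscale (snd (F i j)) (cv (ULt (fst (F i j))))"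
    by metis
  define Dm where "Dm i j = fst (F i j)" for i j
  define g where "g i j = p i j * snd (F i j)" for i j
  have Dl: "\<And>i j. i \<le> 7 \<Longrightarrow> j \<le> 7 \<Longrightarrow> Dm i j \<in> set low" using F by (simp add: Dm_def)
  have 1: "(\<Sum>i\<le>7. \<Sum>j\<le>7. p i j * clmul (clmul (e i) (e j)) Icl B) = (\<Sum>i\<le>7. \<Sum>j\<le>7. g i j * cv (ULt (Dm i j)) B)" for B
    by (intro sum.cong refl) (simp add: F g_def Dm_def clscale_def)
  have S: "(\<Sum>i\<le>7. \<Sum>j\<le>7. g i j * cv (ULt (Dm i j)) B) = (\<Sum>D'\<in>set low. (\<Sum>i\<le>7. \<Sum>j\<le>7. if Dm i j = D' then g i j else 0) * cv (ULt D') B)" for B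
  proof -
    have "(\<Sum>D'\<in>set low. (\<Sum>i\<le>7. \<Sum>j\<le>7. if Dm i j = D' then g i j else 0) * cv (ULt D') B)
       = (\<Sum>D'\<in>set low. \<Sum>i\<le>7. \<Sum>j\<le>7. if Dm i j = D' then g i j * cv (ULt D') B else 0)"
      by (simp add: sum_distrib_right if_mult0)
    also have "\<dots> = (\<Sum>i\<le>7. \<Sum>j\<le>7. \<Sum>D'\<in>set low. if Dm i j = D' then g i j * cv (ULt D') B else 0)"
      by (simp only: sum.swap[of _ "set low"])
    also have "\<dots> = (\<Sum>i\<le>7. \<Sum>j\<le>7. g i j * cv (ULt (Dm i j)) B)"
      by (intro sum.cong refl) (simp add: Dl)
    finally show ?thesis ..
  qed
  have c0: "(\<Sum>i\<le>7. \<Sum>j\<le>7. if Dm i j = D' then g i j else 0) = 0" if "D' \<in> set low" for D'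
  proof -
    have "(\<Sum>i\<le>7. \<Sum>j\<le>7. if Dm i j = D' then g i j else 0) = (\<Sum>i\<le>7. \<Sum>j\<le>7. g i j * cv (ULt (Dm i j)) (bs D'))"
      by (intro sum.cong refl) (simp add: U_low Dl that)
    also have "\<dots> = 0" using hyp that 1 by simp
    finally show ?thesis .
  qed
  show ?thesis unfolding 1 S by (simp add: c0)
qed




lemma tab64: "(\<Sum>i\<le>7. \<Sum>j\<le>7. h (xor (msk i) (msk j)) (sg (msk i) (msk j)) i j) = ((h::nat\<Rightarrow>int\<Rightarrow>nat\<Rightarrow>nat\<Rightarrow>real) 0 (1) 0 0 + h 1 (1) 0 1 + h 2 (1) 0 2 + h 4 (1) 0 3 + h 8 (1) 0 4 + h 16 (1) 0 5 + h 32 (1) 0 6 + h 64 (1) 0 7) + (h 1 (1) 1 0 + h 0 (-1) 1 1 + h 3 (1) 1 2 + h 5 (1) 1 3 + h 9 (1) 1 4 + h 17 (1) 1 5 + h 33 (1) 1 6 + h 65 (1) 1 7) + (h 2 (1) 2 0 + h 3 (-1) 2 1 + h 0 (-1) 2 2 + h 6 (1) 2 3 + h 10 (1) 2 4 + h 18 (1) 2 5 + h 34 (1) 2 6 + h 66 (1) 2 7) + (h 4 (1) 3 0 + h 5 (-1) 3 1 + h 6 (-1) 3 2 + h 0 (-1) 3 3 + h 12 (1) 3 4 + h 20 (1) 3 5 + h 36 (1) 3 6 + h 68 (1) 3 7) + (h 8 (1) 4 0 + h 9 (-1) 4 1 + h 10 (-1) 4 2 + h 12 (-1) 4 3 + h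 0 (-1) 4 4 + h 24 (1) 4 5 + h 40 (1) 4 6 + h 72 (1) 4 7) + (h 16 (1) 5 0 + h 17 (-1) 5 1 + h 18 (-1) 5 2 + h 20 (-1) 5 3 + h 24 (-1) 5 4 + h 0 (-1) 5 5 + h 48 (1) 5 6 + h 80 (1) 5 7) + (h 32 (1) 6 0 + h 33 (-1) 6 1 + h 34 (-1) 6 2 + h 36 (-1) 6 3 + h 40 (-1) 6 4 + h 48 (-1) 6 5 + h 0 (-1) 6 6 + h 96 (1) 6 7) + (h 64 (1) 7 0 + h 65 (-1) 7 1 + h 66 (-1) 7 2 + h 68 (-1) 7 3 + h 72 (-1) 7 4 + h 80 (-1) 7 5 + h 96 (-1) 7 6 + h 0 (-1) 7 7)"
  apply (simp only: sum7)
  apply (simp add: msk_def)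
  by (simp add: sg_eval)

lemma dirac_eq: "dirac f x C = (\<Sum>i\<le>7. \<Sum>j\<le>7. (if C = bs (xor (msk i) (msk j)) then of_int (sg (msk i) (msk j)) else 0) * partial (comp f j) i x)"
  unfolding dirac_def by (intro sum.cong refl) (simp add: eij_cv cv_apply del: cv.simps)

lemma bs_eq_iff: "m < 128 \<Longrightarrow> n < 128 \<Longrightarrow> bs m = bs n \<longleftrightarrow> m = n"
  using bs_inj by blast

lemma msk_lt: "i \<le> 7 \<Longrightarrow> msk i \<in> set (map fst Gt)"
proof -
  assume "i \<le> 7"
  then have "i \<in> set [0,1,2,3,4,5,6,7]" using le7 by auto
  moreover have "list_all (\<lambda>i. msk i \<in> set (map fst Gt)) [0,1,2,3,4,5,6,7]" by code_simp
  ultimately show ?thesis unfolding list_all_iff by blast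
qed

lemma xor_in: "i \<le> 7 \<Longrightarrow> j \<le> 7 \<Longrightarrow> xor (msk i) (msk j) \<in> set (map fst Gt)"
proof -
  assume "i \<le> 7" "j \<le> 7"
  then have ij: "i \<in> set [0,1,2,3,4,5,6,7]" "j \<in> set [0,1,2,3,4,5,6,7]" using le7 by auto
  show ?thesis using T2 ij unfolding list_all_iff by blast
qed

lemma dirac_zero_G: "dirac f x = clzero \<longleftrightarrow> (\<forall>k\<in>set (map fst Gt). dirac f x (bs k) = 0)"
proof
  assume "dirac f x = clzero" then show "\<forall>k\<in>set (map fst Gt). dirac f x (bs k) = 0" by (simp add: clzero_def)
next
  assume H: "\<forall>k\<in>set (map fst Gt). dirac f x (bs k) = 0"
  show "dirac f x = clzero"
  proof (rule ext)
    fix C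
    show "dirac f x C = clzero C"
    proof (cases "\<exists>k\<in>set (map fst Gt). C = bs k")
      case True then show ?thesis using H by (auto simp: clzero_def)
    next
      case False
      then have "\<And>i j. i \<le> 7 \<Longrightarrow> j \<le> 7 \<Longrightarrow> C \<noteq> bs (xor (msk i) (msk j))" using xor_in by blast
      then show ?thesis unfolding dirac_eq clzero_def by (intro sum.neutral ballI) simp
    qed
  qed
qed

definition hh :: "nat \<Rightarrow> (real^8 \<Rightarrow> cl) \<Rightarrow> real^8 \<Rightarrow> nat \<Rightarrow> int \<Rightarrow> nat \<Rightarrow> nat \<Rightarrow> real" where
  "hh k f x m s i j = (if bs k = bs m then of_int s else 0) * partial (comp f j) i x"

lemma dirac_at: "dirac f x (bs k) = (hh k f x 0 (1) 0 0 + hh k f x 1 (1) 0 1 + hh k f x 2 (1) 0 2 + hh k f x 4 (1) 0 3 + hh k f x 8 (1) 0 4 + hh k f x 16 (1) 0 5 + hh k f x 32 (1) 0 6 + hh k f x 64 (1) 0 7) + (hh k f x 1 (1) 1 0 + hh k f x 0 (-1) 1 1 + hh k f x 3 (1) 1 2 + hh k f x 5 (1) 1 3 + hh k f x 9 (1) 1 4 + hh k f x 17 (1) 1 5 + hh k f x 33 (1) 1 6 + hh k f x 65 (1) 1 7) + (hh k f x 2 (1) 2 0 + hh k f x 3 (-1) 2 1 + hh k f x 0 (-1) 2 2 + hh k f x 6 (1) 2 3 + hh k f x 10 (1) 2 4 + hh k f x 18 (1) 2 5 + hh k f x 34 (1) 2 6 + hh k f x 66 (1) 2 7) + (hh k f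 x 4 (1) 3 0 + hh k f x 5 (-1) 3 1 + hh k f x 6 (-1) 3 2 + hh k f x 0 (-1) 3 3 + hh k f x 12 (1) 3 4 + hh k f x 20 (1) 3 5 + hh k f x 36 (1) 3 6 + hh k f x 68 (1) 3 7) + (hh k f x 8 (1) 4 0 + hh k f x 9 (-1) 4 1 + hh k f x 10 (-1) 4 2 + hh k f x 12 (-1) 4 3 + hh k f x 0 (-1) 4 4 + hh k f x 24 (1) 4 5 + hh k f x 40 (1) 4 6 + hh k f x 72 (1) 4 7) + (hh k f x 16 (1) 5 0 + hh k f x 17 (-1) 5 1 + hh k f x 18 (-1) 5 2 + hh k f x 20 (-1) 5 3 + hh k f x 24 (-1) 5 4 + hh k f x 0 (-1) 5 5 + hh k f x 48 (1) 5 6 + hh k f x 80 (1) 5 7) + (hh k f x 32 (1) 6 0 + hh k f x 33 (-1) 6 1 + hh k f x 34 (-1) 6 2 + hh k f x 36 (-1) 6 3 + hh k f x 40 (-1) 6 4 + hh k f x 48 (-1) 6 5 + hh k f x 0 (-1) 6 6 + hh k f x 96 (1) 6 7) + (hh k f x 64 (1) 7 0 + hh k f x 65 (-1) 7 1 + hh k f x 66 (-1) 7 2 + hh k f x 68 (-1) 7 3 + hh k f x 72 (-1) 7 4 + hh k f x 80 (-1) 7 5 + hh k f x 96 (-1) 7 6 + hh k f x 0 (-1) 7 7)"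
proof -
  have "dirac f x (bs k) = (\<Sum>i\<le>7. \<Sum>j\<le>7. hh k f x (xor (msk i) (msk j)) (sg (msk i) (msk j)) i j)"
    unfolding dirac_eq hh_def ..
  then show ?thesis unfolding tab64 .
qed

lemma Gt_keys: "set (map fst Gt) = {0,1,2,4,8,16,32,64,3,5,9,17,33,65,6,10,18,34,66,12,20,36,68,24,40,72,48,80,96}"
  by (simp add: Gt_def)

lemma dirac_zero_riesz: "dirac f x = clzero \<longleftrightarrow>
     (partial (comp f 0) 0 x - (\<Sum>i\<in>{1..7}. partial (comp f i) i x) = 0 \<and>
     (\<forall>i\<in>{1..7}. partial (comp f i) 0 x + partial (comp f 0) i x = 0) \<and>
     (\<forall>i\<in>{1..7}. \<forall>j\<in>{1..7}. i \<noteq> j \<longrightarrow> partial (comp f j) i x - partial (comp f i) j x = 0))"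
  unfolding dirac_zero_G Gt_keys dirac_at I17
  apply (simp only: ball_simps)
  apply (simp add: bs_eq_iff hh_def)
  apply (rule iffI; (elim conjE, intro conjI); linarith)
  done



lemma dirac_I: "clmul (dirac f x) z A = (\<Sum>i\<le>7. \<Sum>j\<le>7. partial (comp f j) i x * clmul (clmul (e i) (e j)) z A)"
proof -
  have "clmul (dirac f x) z A = (\<Sum>i\<le>7. clmul (\<lambda>C. \<Sum>j\<le>7. clmul (e i) (e j) C * partial (comp f j) i x) z A)"
    unfolding dirac_def by (rule clmul_sum_left)
  also have "\<dots> = (\<Sum>i\<le>7. \<Sum>j\<le>7. clmul (\<lambda>C. clmul (e i) (e j) C * partial (comp f j) i x) z A)"
    by (intro sum.cong refl clmul_sum_left)
  also have "\<dots> = (\<Sum>i\<le>7. \<Sum>j\<le>7. partial (comp f j) i x * clmul (clmul (e i) (e j)) z A)"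
    by (intro sum.cong refl clmul_mult_left)
  finally show ?thesis .
qed

lemma card_low: "D \<in> set low \<Longrightarrow> card (bs D) \<in> {0,1,2}"
  by (auto simp: low_def bs_def bl_eval)

lemma goal3_core:
  assumes "\<forall>k\<in>{0,1,2}. grade k (clmul (dirac f x) Icl) = clzero"
  shows "clmul (dirac f x) Icl = clzero"
proof (rule ext)
  fix A
  have hyp: "\<forall>D'\<in>set low. (\<Sum>i\<le>7. \<Sum>j\<le>7. partial (comp f j) i x * clmul (clmul (e i) (e j)) Icl (bs D')) = 0"
  proof
    fix D' assume D': "D' \<in> set low"
    have "grade (card (bs D')) (clmul (dirac f x) Icl) (bs D') = 0"
      using assms card_low[OF D'] by (auto simp: clzero_def)
    then show "(\<Sum>i\<le>7. \<Sum>j\<le>7. partial (comp f j) i x * clmul (clmul (e i) (e j)) Icl (bs D')) = 0"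
      by (simp add: grade_def dirac_I)
  qed
  show "clmul (dirac f x) Icl A = clzero A"
    unfolding dirac_I clzero_def using core3[OF hyp] .
qed

definition hh2 :: "nat set \<Rightarrow> (real^8 \<Rightarrow> cl) \<Rightarrow> real^8 \<Rightarrow> nat \<Rightarrow> int \<Rightarrow> nat \<Rightarrow> nat \<Rightarrow> real" where
  "hh2 C f x m s i j = (if C = bs m then of_int s else 0) * partial (comp f j) i x"

lemma dirac_expl: "dirac f x C = (hh2 C f x 0 (1) 0 0 + hh2 C f x 1 (1) 0 1 + hh2 C f x 2 (1) 0 2 + hh2 C f x 4 (1) 0 3 + hh2 C f x 8 (1) 0 4 + hh2 C f x 16 (1) 0 5 + hh2 C f x 32 (1) 0 6 + hh2 C f x 64 (1) 0 7) + (hh2 C f x 1 (1) 1 0 + hh2 C f x 0 (-1) 1 1 + hh2 C f x 3 (1) 1 2 + hh2 C f x 5 (1) 1 3 + hh2 C f x 9 (1) 1 4 + hh2 C f x 17 (1) 1 5 + hh2 C f x 33 (1) 1 6 + hh2 C f x 65 (1) 1 7) + (hh2 C f x 2 (1) 2 0 + hh2 C f x 3 (-1) 2 1 + hh2 C f x 0 (-1) 2 2 + hh2 C f x 6 (1) 2 3 + hh2 C f x 10 (1) 2 4 + hh2 C f x 18 (1) 2 5 + hh2 C f x 34 (1) 2 6 + hh2 C f x 66 (1) 2 7) + (hh2 C f x 4 (1) 3 0 + hh2 C f x 5 (-1) 3 1 + hh2 C f x 6 (-1) 3 2 + hh2 C f x 0 (-1) 3 3 + hh2 C f x 12 (1)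 3 4 + hh2 C f x 20 (1) 3 5 + hh2 C f x 36 (1) 3 6 + hh2 C f x 68 (1) 3 7) + (hh2 C f x 8 (1) 4 0 + hh2 C f x 9 (-1) 4 1 + hh2 C f x 10 (-1) 4 2 + hh2 C f x 12 (-1) 4 3 + hh2 C f x 0 (-1) 4 4 + hh2 C f x 24 (1) 4 5 + hh2 C f x 40 (1) 4 6 + hh2 C f x 72 (1) 4 7) + (hh2 C f x 16 (1) 5 0 + hh2 C f x 17 (-1) 5 1 + hh2 C f x 18 (-1) 5 2 + hh2 C f x 20 (-1) 5 3 + hh2 C f x 24 (-1) 5 4 + hh2 C f x 0 (-1) 5 5 + hh2 C f x 48 (1) 5 6 + hh2 C f x 80 (1) 5 7) + (hh2 C f x 32 (1) 6 0 + hh2 C f x 33 (-1) 6 1 + hh2 C f x 34 (-1) 6 2 + hh2 C f x 36 (-1) 6 3 + hh2 C f x 40 (-1) 6 4 + hh2 C f x 48 (-1) 6 5 + hh2 C f x 0 (-1) 6 6 + hh2 C f x 96 (1) 6 7) + (hh2 C f x 64 (1) 7 0 + hh2 C f x 65 (-1) 7 1 + hh2 C f x 66 (-1) 7 2 + hh2 C f x 68 (-1) 7 3 + hh2 C f x 72 (-1) 7 4 + hh2 C f x 80 (-1) 7 5 + hh2 C f x 96 (-1) 7 6 + hh2 C f x 0 (-1) 7 7)"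
proof -
  have "dirac f x C = (\<Sum>i\<le>7. \<Sum>j\<le>7. hh2 C f x (xor (msk i) (msk j)) (sg (msk i) (msk j)) i j)"
    unfolding dirac_eq hh2_def ..
  then show ?thesis unfolding tab64 .
qed

definition f0 :: "real^8 \<Rightarrow> cl" where
  "f0 = (\<lambda>x::real^8. clsub (clscale (x $ 2) (e 1)) (clscale (x $ 7) (e 4)))"

lemma coord_upd_nth: "coord_upd x i t $ k = (if k = of_nat i then t else x $ k)"
  by (simp add: coord_upd_def)

lemma f0_deriv: "((\<lambda>t. comp f0 j (coord_upd x i t)) has_real_derivative
   ((if (2::8) = of_nat i then 1 else 0) * e 1 (idx j) - (if (7::8) = of_nat i then 1 else 0) * e 4 (idx j))) (at t)"
proof -
  have eq: "(\<lambda>t. comp f0 j (coord_upd x i t)) = (\<lambda>t. (if (2::8) = of_nat i then t else x $ 2) * e 1 (idx j) - (if (7::8) = of_nat i then t else x $ 7) * e 4 (idx j))"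
    by (simp add: comp_def f0_def clsub_def clscale_def coord_upd_nth)
  show ?thesis unfolding eq
    by (cases "(2::8) = of_nat i"; cases "(7::8) = of_nat i"; auto intro!: derivative_eq_intros)
qed

lemma f0_partial: "partial (comp f0 j) i x = (if (2::8) = of_nat i then 1 else 0) * e 1 (idx j) - (if (7::8) = of_nat i then 1 else 0) * e 4 (idx j)"
  unfolding partial_def by (rule DERIV_imp_deriv[OF f0_deriv])

lemma f0_PF: "f0 \<in> paravector_functions"
  unfolding paravector_functions_def has_partials_def paravector_def
proof (intro CollectI conjI allI impI)
  fix x A assume "\<forall>j\<le>7. A \<noteq> idx j"
  then have "A \<noteq> idx 1" "A \<noteq> idx 4" by auto
  then show "f0 x A = 0" by (simp add: f0_def clsub_def clscale_def e_def blade_def)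
next
  fix j i :: nat and x :: "real^8" assume "j \<le> 7" "i \<le> 7"
  show "(\<lambda>t. comp f0 j (coord_upd x i t)) differentiable at (x $ of_nat i)"
    using f0_deriv real_differentiable_def by blast
qed

lemma e_idx: "e a (idx b) = (if a = b then 1 else 0)"
  by (auto simp: e_def blade_def idx_def)

lemma e47: "clmul (e 4) (e 7) = cv [(72,1)]"
  using eij_cv[of 4 7] by (simp add: msk_def sg_eval del: cv.simps)
lemma e12: "clmul (e 1) (e 2) = cv [(3,1)]"
  using eij_cv[of 1 2] by (simp add: msk_def sg_eval del: cv.simps)

lemma ex_cv: "clsub (clmul (e 4) (e 7)) (clmul (e 1) (e 2)) = cv [(72,1),(3,-1)]"
  unfolding e47 e12 cv_sub by simp

lemma f0_dirac: "dirac f0 x = clsub (clmul (e 4) (e 7)) (clmul (e 1) (e 2))"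
proof (rule ext)
  fix C
  show "dirac f0 x C = clsub (clmul (e 4) (e 7)) (clmul (e 1) (e 2)) C"
    unfolding ex_cv dirac_expl hh2_def f0_partial e_idx cv_apply
    by (simp add: msk_def sg_eval del: cv.simps)
qed




lemma ex_mul: "mulL [(72,1),(3,-1)] Il = [(72, 1), (79, -1), (81, 1), (86, 1), (98, 1), (101, -1), (123, 1), (124, 1), (3, 1), (4, 1), (26, -1), (29, 1), (41, 1), (46, 1), (48, -1), (55, 1), (3, -1), (4, -1), (26, 1), (29, -1), (41, -1), (46, -1), (48, 1), (55, -1), (72, -1), (79, 1), (81, -1), (86, -1), (98, -1), (101, 1), (123, -1), (124, -1)]"
  unfolding Il_def apply (simp add: mulL_def) by (simp add: sg_eval)

lemma ex_zero_cv: "cv [] = cv ([(72, 1), (79, -1), (81, 1), (86, 1), (98, 1), (101, -1), (123, 1), (124, 1), (3, 1), (4, 1), (26, -1), (29, 1), (41, 1), (46, 1), (48, -1), (55, 1), (3, -1), (4, -1), (26, 1), (29, -1), (41, -1), (46, -1), (48, 1), (55, -1), (72, -1), (79, 1), (81, -1), (86, -1), (98, -1), (101, 1), (123, -1), (124, -1)])"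
  by (rule cv_eq; code_simp)

lemma ex_I: "clmul (cv [(72,1),(3,-1)]) Icl = clzero"
proof -
  have "clmul (cv [(72,1),(3,-1)]) Icl = clscale (1/16) (cv (mulL [(72,1),(3,-1)] Il))"
    by (simp only: Icl_cv clmul_scale_right cv_mul)
  also have "\<dots> = clzero" unfolding ex_mul ex_zero_cv[symmetric] by (simp add: clscale_def clzero_def)
  finally show ?thesis .
qed

lemma ex_nz: "cv [(72,1),(3,-1)] \<noteq> clzero"
proof
  assume "cv [(72,1),(3,-1)] = clzero"
  then have "cv [(72,1),(3,-1)] (bs 3) = 0" by (simp add: clzero_def)
  then show False by (simp add: cv_apply bs_eq_iff del: cv.simps)
qed

lemma grade_zero: "grade k clzero = clzero" by (simp add: grade_def clzero_def fun_eq_iff)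

theorem mainTheorem17:
  shows "M_R = {f \<in> paravector_functions. riesz f}
    \<and> M_R \<subset> {f \<in> paravector_functions. \<forall>x. clmul (dirac f x) Icl = clzero}
    \<and> {f \<in> paravector_functions. \<forall>x. clmul (dirac f x) Icl = clzero}
         = {f \<in> paravector_functions. \<forall>x. \<forall>k\<in>{0,1,2}. grade k (clmul (dirac f x) Icl) = clzero}
    \<and> (let f = (\<lambda>x::real^8. clsub (clscale (x $ 2) (e 1)) (clscale (x $ 7) (e 4))) in
           f \<in> paravector_functions \<and>
           (\<forall>x. dirac f x = clsub (clmul (e 4) (e 7)) (clmul (e 1) (e 2))) \<and>
           clsub (clmul (e 4) (e 7)) (clmul (e 1) (e 2)) \<noteq> clzero \<and>
           (\<forall>x. \<forall>k\<in>{0,1,2}. grade k (clmul (dirac f x) Icl) = clzero))"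
proof (intro conjI)
  show "M_R = {f \<in> paravector_functions. riesz f}"
    unfolding M_R_def riesz_def dirac_zero_riesz ..
  have f0I: "clmul (dirac f0 x) Icl = clzero" for x
    unfolding f0_dirac ex_cv ex_I ..
  have f0nz: "dirac f0 x \<noteq> clzero" for x
    unfolding f0_dirac ex_cv by (rule ex_nz)
  have f0nM: "f0 \<notin> M_R"
    using f0nz unfolding M_R_def by blast
  show "M_R \<subset> {f \<in> paravector_functions. \<forall>x. clmul (dirac f x) Icl = clzero}"
  proof
    show "M_R \<subseteq> {f \<in> paravector_functions. \<forall>x. clmul (dirac f x) Icl = clzero}"
      by (auto simp: M_R_def clmul_zero_left)
    show "M_R \<noteq> {f \<in> paravector_functions. \<forall>x. clmul (dirac f x) Icl = clzero}"
      using f0nM f0_PF f0I by blast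
  qed
  show "{f \<in> paravector_functions. \<forall>x. clmul (dirac f x) Icl = clzero}
         = {f \<in> paravector_functions. \<forall>x. \<forall>k\<in>{0,1,2}. grade k (clmul (dirac f x) Icl) = clzero}"
    using goal3_core by (auto simp: grade_zero)
  show "let f = (\<lambda>x::real^8. clsub (clscale (x $ 2) (e 1)) (clscale (x $ 7) (e 4))) in
           f \<in> paravector_functions \<and>
           (\<forall>x. dirac f x = clsub (clmul (e 4) (e 7)) (clmul (e 1) (e 2))) \<and>
           clsub (clmul (e 4) (e 7)) (clmul (e 1) (e 2)) \<noteq> clzero \<and>
           (\<forall>x. \<forall>k\<in>{0,1,2}. grade k (clmul (dirac f x) Icl) = clzero)"
    unfolding Let_def f0_def[symmetric]
  proof (intro conjI allI ballI)
    show "clsub (clmul (e 4) (e 7)) (clmul (e 1) (e 2)) \<noteq> clzero"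
      unfolding ex_cv by (rule ex_nz)
    fix x k
    show "grade k (clmul (dirac f0 x) Icl) = clzero" by (simp only: f0I grade_zero)
  qed (auto simp only: f0_PF f0_dirac)
qed


end
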